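(* (a) Let $h\in\omega$ and let $(p_i)_{i<\pi(h)}$ be conditions of $\tilde{\mathbb E}$ that all contain a common node $s$ of height $h$ which lies above (i.e., extends) the stem of each $p_i$. Then there is $q\in\tilde{\mathbb E}$ with $q\le p_i$ for all $i<\pi(h)$. (b) $\tilde{\mathbb E}$ is $(\rho,\pi)$-linked; in particular it is ccc. (c) The generic branch $\eta\in\lim(T^* )$ added by $\tilde{\mathbb E}$ is eventually different from every real of the ground model, i.e., for every $x\in\omega^\omega\cap V$ we have $\eta(n)\ne x(n)$ for all but finitely many $n$. (d) If $p\in\tilde{\mathbb E}$ is such that $\operatorname{loss}(p)$ is defined and $s=\operatorname{stem}(p)$, then for every $h>|s|$, \[ \frac{|p\cap\omega^h|}{|T^*\cap\omega^h\cap[s]|}\ge1-\tfrac12\operatorname{loss}(p). \]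
   Context: The tree $T^*\subseteq\omega^{<\omega}$ and associated functions are defined by simultaneous induction on the height $h\ge0$: $T^*\cap\omega^0=\{\langle\rangle\}$; given $T^*\cap\omega^h$, put $\rho(h)=\max(|T^*\cap\omega^h|,h+2)$, $\pi(h)=\big((h+1)^2\rho(h)^{h+1}\big)^{\rho(h)^h}$, $a(h)=\pi(h)^{h+2}$, $M(h)=a(h)^2$; for every $s\in T^*\cap\omega^h$ let $\Omega_s=\{s^\frown\ell:\ \ell<M(h)\}$ (this defines $T^*\cap\omega^{h+1}$). For integers $0\le n<M(h)$ set $\mu_h(n)=\log_{a(h)}\big(\frac{M(h)}{M(h)-n}\big)$ and $\mu_h(M(h))=\infty$; for $s$ of height $h$ and $A\subseteq\Omega_s$ put $\mu_s(A)=\mu_h(|A|)$. For a subtree $p\subseteq T^*$ and $s\in p$ let $\mu_s(p)=\mu_s(\{t\in p: t\in\Omega_s\})$; the stem of $p$ is its shortest splitting node, and "$t\in p$ above the stem" means $t\in p$ extends the stem. $\lim(p)$ is the set of $x\in\omega^\omega$ with $x\restriction n\in p$ for all $n$, and $[s]$ is the set of nodes of $T^*$ comparable with $s$. $\tilde{\mathbb E}$ is the set of subtrees $p\subseteq T^*$ whose stem has some height $h^*$ and such that $\mu_t(p)\ge1+\frac1{h^*}$ for all $t\in p$ above the stem (for $h^*=0$ this forces $p=T^*$), ordered by inclusion ($q\le p$ iff $q\subseteq p$). $\operatorname{loss}(p)$ is defined iff there is an integer $m\ge2$ such that the stem of $p$ has height $h^*>3m$ and $\mu_s(p)\ge1+\frac1m$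 for all $s\in p$ of height $\ge h^*$; then $\operatorname{loss}(p)=\frac1m$ for the maximal such $m$. For functions $f,g:\omega\to\omega$ tending to infinity, a forcing $Q$ is $(f,g)$-linked if there are sets $Q^i_j\subseteq Q$ ($i<\omega$, $j<f(i)$), each $g(i)$-linked (any $g(i)$ of its elements have a common extension), such that every $q\in Q$ belongs to $\bigcup_{j<f(i)}Q^i_j$ for all sufficiently large $i$. *)

theory Defs
  imports Complex_Main "HOL-Library.Extended_Real" "HOL-Library.Sublist"
begin

text \<open>Nodes of \<omega>^{<\<omega>} are lists of naturals; s\<frown>l is s @ [l]; height is length.\<close>

fun Tlev :: "nat \<Rightarrow> nat list set" where
  "Tlev 0 = {[]}"
| "Tlev (Suc h) =
     (let N = card (Tlev h);
          r = max N (h + 2);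
          pp = ((h + 1)^2 * r^(h + 1))^(r^h);
          aa = pp^(h + 2);
          MM = aa^2
      in {s @ [l] | s l. s \<in> Tlev h \<and> l < MM})"

definition Tstar :: "nat list set" where
  "Tstar = (\<Union>h. Tlev h)"

definition rho :: "nat \<Rightarrow> nat" where
  "rho h = max (card (Tlev h)) (h + 2)"

definition pi_fun :: "nat \<Rightarrow> nat" where
  "pi_fun h = ((h + 1)^2 * rho h^(h + 1))^(rho h^h)"

definition a_fun :: "nat \<Rightarrow> nat" where
  "a_fun h = pi_fun h^(h + 2)"

definition M_fun :: "nat \<Rightarrow> nat" where
  "M_fun h = a_fun h^2"

definition Omega :: "nat list \<Rightarrow> nat list set" where
  "Omega s = {s @ [l] | l. l < M_fun (length s)}"

definition mu_h :: "nat \<Rightarrow> nat \<Rightarrow> ereal" where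
  "mu_h h n = (if n < M_fun h
     then ereal (log (real (a_fun h)) (real (M_fun h) / (real (M_fun h) - real n)))
     else \<infinity>)"

definition mu_set :: "nat list \<Rightarrow> nat list set \<Rightarrow> ereal" where
  "mu_set s A = mu_h (length s) (card A)"

definition succs :: "nat list set \<Rightarrow> nat list \<Rightarrow> nat list set" where
  "succs p s = {t \<in> p. t \<in> Omega s}"

definition mu_node :: "nat list set \<Rightarrow> nat list \<Rightarrow> ereal" where
  "mu_node p s = mu_set s (succs p s)"

definition subtree :: "nat list set \<Rightarrow> bool" where
  "subtree p \<longleftrightarrow> p \<subseteq> Tstar \<and> p \<noteq> {} \<and> (\<forall>t\<in>p. \<forall>u. prefix u t \<longrightarrow> u \<in> p)"

definition splitting :: "nat list set \<Rightarrow> nat list \<Rightarrow> bool" where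
  "splitting p s \<longleftrightarrow> s \<in> p \<and> card {t \<in> p. \<exists>l. t = s @ [l]} \<ge> 2"

definition is_stem :: "nat list set \<Rightarrow> nat list \<Rightarrow> bool" where
  "is_stem p s \<longleftrightarrow> splitting p s \<and>
     (\<forall>t. splitting p t \<and> t \<noteq> s \<longrightarrow> length s < length t)"

definition stem :: "nat list set \<Rightarrow> nat list" where
  "stem p = (THE s. is_stem p s)"

text \<open>Threshold 1 + 1/h*, with 1/0 read as \<infinity> (so h* = 0 forces p = T*).\<close>
definition thr :: "nat \<Rightarrow> ereal" where
  "thr h = (if h = 0 then \<infinity> else ereal (1 + 1 / real h))"

definition Etilde :: "nat list set set" where
  "Etilde = {p. subtree p \<and> (\<exists>s. is_stem p s \<and>
      (\<forall>t\<in>p. prefix s t \<longrightarrow> mu_node p t \<ge> thr (length s)))}"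

definition loss_ok :: "nat list set \<Rightarrow> nat \<Rightarrow> bool" where
  "loss_ok p m \<longleftrightarrow> m \<ge> 2 \<and> length (stem p) > 3 * m \<and>
     (\<forall>s\<in>p. length s \<ge> length (stem p) \<longrightarrow> mu_node p s \<ge> ereal (1 + 1 / real m))"

definition loss_defined :: "nat list set \<Rightarrow> bool" where
  "loss_defined p \<longleftrightarrow> (\<exists>m. loss_ok p m)"

definition loss :: "nat list set \<Rightarrow> real" where
  "loss p = 1 / real (GREATEST m. loss_ok p m)"

text \<open>Abstract forcing notions: a set Q of conditions with order le (le q p = q is stronger).\<close>
definition linked_set :: "nat \<Rightarrow> 'a set \<Rightarrow> 'a set \<Rightarrow> ('a \<Rightarrow> 'a \<Rightarrow> bool) \<Rightarrow> bool" where
  "linked_set k A Q le \<longleftrightarrow> (\<forall>x :: nat \<Rightarrow> 'a. (\<forall>i<k. x i \<in> A) \<longrightarrow>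
      (\<exists>r\<in>Q. \<forall>i<k. le r (x i)))"

definition fg_linked :: "(nat \<Rightarrow> nat) \<Rightarrow> (nat \<Rightarrow> nat) \<Rightarrow> 'a set \<Rightarrow> ('a \<Rightarrow> 'a \<Rightarrow> bool) \<Rightarrow> bool" where
  "fg_linked f g Q le \<longleftrightarrow>
     filterlim f at_top sequentially \<and> filterlim g at_top sequentially \<and>
     (\<exists>QQ :: nat \<Rightarrow> nat \<Rightarrow> 'a set.
        (\<forall>i j. j < f i \<longrightarrow> QQ i j \<subseteq> Q \<and> linked_set (g i) (QQ i j) Q le) \<and>
        (\<forall>q\<in>Q. \<forall>\<^sub>F i in sequentially. \<exists>j<f i. q \<in> QQ i j))"

definition compatible :: "'a set \<Rightarrow> ('a \<Rightarrow> 'a \<Rightarrow> bool) \<Rightarrow> 'a \<Rightarrow> 'a \<Rightarrow> bool" where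
  "compatible Q le p q \<longleftrightarrow> (\<exists>r\<in>Q. le r p \<and> le r q)"

definition ccc :: "'a set \<Rightarrow> ('a \<Rightarrow> 'a \<Rightarrow> bool) \<Rightarrow> bool" where
  "ccc Q le \<longleftrightarrow> (\<forall>A \<subseteq> Q. (\<forall>p\<in>A. \<forall>q\<in>A. p \<noteq> q \<longrightarrow> \<not> compatible Q le p q)
      \<longrightarrow> countable A)"

text \<open>q forces that the generic branch avoids x from position n on:
  no node t of q has t!m = x m for some m \<ge> n.\<close>
definition avoids_from :: "nat list set \<Rightarrow> (nat \<Rightarrow> nat) \<Rightarrow> nat \<Rightarrow> bool" where
  "avoids_from q x n \<longleftrightarrow> (\<forall>t\<in>q. \<forall>m. n \<le> m \<and> m < length t \<longrightarrow> t ! m \<noteq> x m)"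

end

theory Submission
  imports Defs
begin

lemma Tlev_Suc: "Tlev (Suc h) = {s @ [l] | s l. s \<in> Tlev h \<and> l < M_fun h}"
  by (simp add: Let_def M_fun_def a_fun_def pi_fun_def rho_def)

declare Tlev.simps(2)[simp del]

lemma Tlev_length: "t \<in> Tlev h \<Longrightarrow> length t = h"
  by (induction h arbitrary: t) (auto simp: Tlev_Suc)

lemma Tlev_finite: "finite (Tlev h)"
proof (induction h)
  case 0 then show ?case by simp
next
  case (Suc h)
  have "Tlev (Suc h) = (\<lambda>(s,l). s @ [l]) ` (Tlev h \<times> {..<M_fun h})"
    by (auto simp: Tlev_Suc)
  then show ?case using Suc by simp
qed

lemma rho_ge: "rho h \<ge> h + 2" by (simp add: rho_def)

lemma pi_ge2: "pi_fun h \<ge> 2"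
proof -
  have r: "rho h \<ge> 2" using rho_ge[of h] by simp
  have "(h+1)^2 * rho h^(h+1) \<ge> 1 * 2"
  proof (rule mult_mono)
    show "1 \<le> (h+1)^2" by simp
    have "rho h \<le> rho h ^ (h+1)" using r by (intro self_le_power) auto
    then show "2 \<le> rho h ^ (h+1)" using r by linarith
  qed auto
  moreover have "rho h ^ h \<ge> 1" using r by simp
  ultimately have "((h+1)^2 * rho h^(h+1))^(rho h^h) \<ge> 2 ^ 1"
    by (metis le_trans self_le_power mult_1 not_one_le_zero one_le_numeral order.trans power_one_right less_le_trans zero_less_iff_neq_zero not_less)
  then show ?thesis by (simp add: pi_fun_def)
qed

lemma M_pos: "M_fun h > 0"
  using pi_ge2[of h] by (simp add: M_fun_def a_fun_def)

lemma card_Tlev_mono: "card (Tlev h) \<le> card (Tlev (Suc h))"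
proof -
  have "inj_on (\<lambda>s. s @ [0]) (Tlev h)" by (auto simp: inj_on_def)
  moreover have "(\<lambda>s. s @ [0]) ` Tlev h \<subseteq> Tlev (Suc h)" using M_pos[of h] by (auto simp: Tlev_Suc)
  ultimately show ?thesis using Tlev_finite[of "Suc h"] by (metis card_image card_mono)
qed

lemma rho_mono: "mono rho"
unfolding mono_iff_le_Suc proof
  fix h show "rho h \<le> rho (Suc h)" using card_Tlev_mono[of h] by (auto simp: rho_def le_max_iff_disj)
qed

lemma pi_mono: "mono pi_fun"
unfolding mono_iff_le_Suc proof
  fix h
  have r: "rho h \<le> rho (Suc h)" using rho_mono by (simp add: mono_def)
  have r1: "rho h \<ge> 1" using rho_ge[of h] by simp
  have b: "(h+1)^2 * rho h^(h+1) \<le> (Suc h+1)^2 * rho (Suc h)^(Suc h+1)"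
  proof (rule mult_mono)
    show "(h+1)^2 \<le> (Suc h+1)^2" by (rule power_mono) auto
    have "rho h^(h+1) \<le> rho h^(Suc h+1)" by (rule power_increasing) (use r1 in auto)
    also have "\<dots> \<le> rho (Suc h)^(Suc h+1)" using r by (rule power_mono) simp
    finally show "rho h^(h+1) \<le> rho (Suc h)^(Suc h+1)" .
  qed auto
  have e: "rho h^h \<le> rho (Suc h)^(Suc h)"
  proof -
    have "rho h^h \<le> rho h^(Suc h)" by (rule power_increasing) (use r1 in auto)
    also have "\<dots> \<le> rho (Suc h)^(Suc h)" using r by (rule power_mono) simp
    finally show ?thesis .
  qed
  have b1: "(h+1)^2 * rho h^(h+1) \<ge> 1" using r1 by simp
  have "((h+1)^2 * rho h^(h+1))^(rho h^h) \<le> ((h+1)^2 * rho h^(h+1))^(rho (Suc h)^(Suc h))"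
    using b1 e by (rule power_increasing[rotated])
  also have "\<dots> \<le> ((Suc h+1)^2 * rho (Suc h)^(Suc h+1))^(rho (Suc h)^(Suc h))"
    using b by (rule power_mono) simp
  finally show "pi_fun h \<le> pi_fun (Suc h)" by (simp add: pi_fun_def)
qed

lemma a_ge_pi_nat: "pi_fun l \<le> a_fun l"
  unfolding a_fun_def using pi_ge2[of l] by (intro self_le_power) auto

lemma a_ge2: "real (a_fun l) \<ge> 2"
proof -
  have "2 \<le> a_fun l" using a_ge_pi_nat[of l] pi_ge2[of l] by linarith
  then show ?thesis by simp
qed

lemma pi_le_a: "real (pi_fun l) \<le> real (a_fun l)"
  using a_ge_pi_nat[of l] by simp

lemma M_real: "real (M_fun l) = real (a_fun l) ^ 2" by (simp add: M_fun_def)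

lemma pi_le_apowr:
  assumes H: "H \<ge> (1::nat)" and l: "2 * H \<le> l"
  shows "real (pi_fun l) \<le> real (a_fun l) powr (1 / (2 * real H))"
proof -
  have p: "real (pi_fun l) \<ge> 1" using pi_ge2[of l] by simp
  have "real (pi_fun l) powr real (l+2) = real (pi_fun l) ^ (l+2)"
    using p by (intro powr_realpow) simp
  then have "real (a_fun l) = real (pi_fun l) powr real (l+2)"
    by (simp add: a_fun_def)
  then have "real (a_fun l) powr (1 / (2 * real H)) = real (pi_fun l) powr (real (l+2) / (2 * real H))"
    by (simp add: powr_powr)
  moreover have "1 \<le> real (l+2) / (2 * real H)" using H l by (simp add: field_simps)
  moreover have "real (pi_fun l) powr 1 \<le> real (pi_fun l) powr (real (l+2) / (2 * real H))"
    using p calculation(2) by (intro powr_mono) auto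
  ultimately show ?thesis using p by simp
qed

lemma mu_eq:
  assumes kl: "k < M_fun l"
  shows "mu_h l k = ereal (2 - log (real (a_fun l)) (real (M_fun l) - real k))"
proof -
  define A where "A = real (a_fun l)"
  define d where "d = real (M_fun l) - real k"
  have A2: "A \<ge> 2" using a_ge2 by (simp add: A_def)
  have d0: "d > 0" using kl by (simp add: d_def)
  have M: "real (M_fun l) = A^2" by (simp add: A_def M_real)
  have "log A (real (M_fun l) / d) = log A (real (M_fun l)) - log A d"
    using A2 d0 M by (intro log_divide_pos) auto
  also have "log A (real (M_fun l)) = 2" unfolding M using A2 log_pow_cancel[of A 2] by simp
  finally have e: "log A (real (M_fun l) / d) = 2 - log A d" .
  show ?thesis unfolding mu_h_def if_P[OF kl] A_def[symmetric] d_def[symmetric] e ..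
qed

lemma log_le_iff2:
  assumes "k < M_fun l"
  shows "log (real (a_fun l)) (real (M_fun l) - real k) \<le> y \<longleftrightarrow>
         real (M_fun l) - real k \<le> real (a_fun l) powr y"
  using assms a_ge2[of l] by (intro log_le_iff) auto

lemma mu_extract:
  assumes k: "k \<le> M_fun l" and r: "r \<ge> (1::nat)" and mu: "mu_h l k \<ge> ereal (1 + 1 / real r)"
  shows "real (M_fun l) - real k \<le> real (a_fun l) powr (1 - 1 / real r)"
proof (cases "k = M_fun l")
  case True then show ?thesis by simp
next
  case False
  then have kl: "k < M_fun l" using k by simp
  have "1 + 1 / real r \<le> 2 - log (real (a_fun l)) (real (M_fun l) - real k)"
    using mu unfolding mu_eq[OF kl] by simp
  then have "log (real (a_fun l)) (real (M_fun l) - real k) \<le> 1 - 1 / real r" by simp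
  then show ?thesis using log_le_iff2[OF kl] by blast
qed

lemma mu_build:
  assumes k: "k \<le> M_fun l" and r: "r \<ge> (1::nat)"
    and b: "real (M_fun l) - real k \<le> real (a_fun l) powr (1 - 1 / real r)"
  shows "mu_h l k \<ge> ereal (1 + 1 / real r)"
proof (cases "k = M_fun l")
  case True then show ?thesis by (simp add: mu_h_def)
next
  case False
  then have kl: "k < M_fun l" using k by simp
  have "log (real (a_fun l)) (real (M_fun l) - real k) \<le> 1 - 1 / real r"
    using log_le_iff2[OF kl] b by blast
  then have "1 + 1 / real r \<le> 2 - log (real (a_fun l)) (real (M_fun l) - real k)" by simp
  then show ?thesis unfolding mu_eq[OF kl] by simp
qed

lemma Omega_finite: "finite (Omega u)"
proof -
  have "Omega u = (\<lambda>l. u @ [l]) ` {..<M_fun (length u)}" by (auto simp: Omega_def)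
  then show ?thesis by simp
qed

lemma Omega_card: "card (Omega u) = M_fun (length u)"
proof -
  have e: "Omega u = (\<lambda>l. u @ [l]) ` {..<M_fun (length u)}" by (auto simp: Omega_def)
  have i: "inj_on (\<lambda>l. u @ [l]) {..<M_fun (length u)}" by (auto simp: inj_on_def)
  show ?thesis unfolding e card_image[OF i] card_lessThan ..
qed

lemma succs_sub: "succs p u \<subseteq> Omega u" by (auto simp: succs_def)

lemma succs_finite: "finite (succs p u)"
  by (rule finite_subset[OF succs_sub Omega_finite])

lemma card_succs_le: "card (succs p u) \<le> M_fun (length u)"
  using card_mono[OF Omega_finite succs_sub, of p u] by (simp add: Omega_card)

lemma Tstar_lev: "t \<in> Tstar \<Longrightarrow> t \<in> Tlev (length t)"
  by (auto simp: Tstar_def dest: Tlev_length)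

lemma Tstar_iff: "t \<in> Tstar \<longleftrightarrow> t \<in> Tlev (length t)"
  by (auto simp: Tstar_def dest: Tlev_length)

lemma Tstar_snoc: "u @ [l] \<in> Tstar \<longleftrightarrow> u \<in> Tstar \<and> l < M_fun (length u)"
proof -
  have "u @ [l] \<in> Tstar \<longleftrightarrow> u @ [l] \<in> Tlev (Suc (length u))"
    using Tstar_iff[of "u @ [l]"] by simp
  also have "\<dots> \<longleftrightarrow> u \<in> Tlev (length u) \<and> l < M_fun (length u)"
    unfolding Tlev_Suc by blast
  also have "\<dots> \<longleftrightarrow> u \<in> Tstar \<and> l < M_fun (length u)"
    using Tstar_iff[of u] by blast
  finally show ?thesis .
qed

lemma Omega_Tstar: "u \<in> Tstar \<Longrightarrow> Omega u \<subseteq> Tstar"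
  by (auto simp: Omega_def Tstar_snoc)

lemma Tstar_Nil: "[] \<in> Tstar" by (simp add: Tstar_iff)

lemma Tstar_prefix: "t \<in> Tstar \<Longrightarrow> prefix u t \<Longrightarrow> u \<in> Tstar"
proof (induction t rule: rev_induct)
  case Nil then show ?case by simp
next
  case (snoc x xs)
  then show ?case by (auto simp: Tstar_snoc prefix_snoc)
qed

lemma succs_alt: assumes "q \<subseteq> Tstar" shows "{v \<in> q. \<exists>l. v = u @ [l]} = succs q u"
proof (rule set_eqI)
  fix v show "v \<in> {v \<in> q. \<exists>l. v = u @ [l]} \<longleftrightarrow> v \<in> succs q u"
  proof
    assume "v \<in> {v \<in> q. \<exists>l. v = u @ [l]}"
    then obtain l where v: "v \<in> q" "v = u @ [l]" by blast
    then have "u @ [l] \<in> Tstar" using assms by blast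
    then show "v \<in> succs q u" using v by (auto simp: succs_def Omega_def Tstar_snoc)
  qed (auto simp: succs_def Omega_def)
qed

lemma is_stem_unique: assumes "is_stem p s" "is_stem p s'" shows "s = s'"
proof (rule ccontr)
  assume "s \<noteq> s'"
  with assms have "length s < length s'" "length s' < length s" unfolding is_stem_def by auto
  then show False by simp
qed

lemma stem_eq: "is_stem p s \<Longrightarrow> stem p = s"
  unfolding stem_def using is_stem_unique by blast

lemma Etilde_D:
  assumes "p \<in> Etilde"
  shows "subtree p" "is_stem p (stem p)"
    "\<forall>t\<in>p. prefix (stem p) t \<longrightarrow> mu_node p t \<ge> thr (length (stem p))"
  using assms stem_eq unfolding Etilde_def by auto

lemma Etilde_sub: "p \<in> Etilde \<Longrightarrow> p \<subseteq> Tstar"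
  using Etilde_D(1) subtree_def by blast

lemma Etilde_pref: "p \<in> Etilde \<Longrightarrow> t \<in> p \<Longrightarrow> prefix u t \<Longrightarrow> u \<in> p"
  using Etilde_D(1) subtree_def by blast

lemma stem_in: "p \<in> Etilde \<Longrightarrow> stem p \<in> p"
  using Etilde_D(2) is_stem_def splitting_def by blast

lemma thr_ge: "thr h \<ge> ereal (1 + 1 / real (h+1))"
proof (cases "h = 0")
  case True then show ?thesis by (simp add: thr_def)
next
  case False
  then have "1 / real (h+1) \<le> 1 / real h" by (simp add: frac_le)
  then show ?thesis using False by (simp add: thr_def)
qed

lemma miss_bound:
  assumes p: "p \<in> Etilde" and u: "u \<in> p" "prefix (stem p) u" and h: "length (stem p) \<le> h"
  shows "real (M_fun (length u)) - real (card (succs p u))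
           \<le> real (a_fun (length u)) powr (1 - 1 / real (h+1))"
proof -
  have "mu_node p u \<ge> ereal (1 + 1 / real (length (stem p) + 1))"
    using Etilde_D(3)[OF p] u thr_ge order_trans by blast
  then have "real (M_fun (length u)) - real (card (succs p u))
           \<le> real (a_fun (length u)) powr (1 - 1 / real (length (stem p)+1))"
    by (intro mu_extract) (auto simp: mu_node_def mu_set_def card_succs_le)
  also have "\<dots> \<le> real (a_fun (length u)) powr (1 - 1 / real (h+1))"
  proof (rule powr_mono)
    show "1 - 1 / real (length (stem p) + 1) \<le> 1 - 1 / real (h + 1)"
      using h by (simp add: frac_le)
    show "1 \<le> real (a_fun (length u))" using a_ge2[of "length u"] by simp
  qed
  finally show ?thesis .
qed

lemma powr_le_self:
  assumes "r \<ge> (1::nat)"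
  shows "real (a_fun l) powr (1 - 1 / real r) \<le> real (a_fun l)"
proof -
  have "real (a_fun l) powr (1 - 1 / real r) \<le> real (a_fun l) powr 1"
    using a_ge2[of l] by (intro powr_mono) auto
  then show ?thesis using a_ge2[of l] by simp
qed

lemma powr_less_self:
  assumes "H \<ge> (1::nat)"
  shows "real (a_fun l) powr (1 - 1 / real H) < real (a_fun l)"
proof -
  have "real (a_fun l) powr (1 - 1 / real H) < real (a_fun l) powr 1"
    using a_ge2[of l] assms by (intro powr_less_mono) auto
  then show ?thesis using a_ge2[of l] by simp
qed

lemma build:
  assumes qT: "q \<subseteq> Tstar" and qp: "\<forall>u\<in>q. \<forall>v. prefix v u \<longrightarrow> v \<in> q" and t: "t \<in> q"
    and comp: "\<forall>u\<in>q. prefix u t \<or> prefix t u" and t1: "length t \<ge> 1"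
    and b: "\<forall>u\<in>q. prefix t u \<longrightarrow> real (M_fun (length u)) - real (card (succs q u))
              \<le> real (a_fun (length u)) powr (1 - 1 / real (length t))"
  shows "q \<in> Etilde"
proof -
  have sub: "subtree q" using qT qp t unfolding subtree_def by blast
  have card2: "card (succs q t) \<ge> 2"
  proof -
    define A where "A = real (a_fun (length t))"
    have A2: "A \<ge> 2" using a_ge2 by (simp add: A_def)
    have "real (M_fun (length t)) - real (card (succs q t)) \<le> A"
      using b t powr_le_self[OF t1, of "length t"] by (auto simp: A_def)
    moreover have "real (M_fun (length t)) = A^2" by (simp add: A_def M_real)
    moreover have "A^2 - A \<ge> 2"
    proof -
      have "(A-2)*(A+1) \<ge> 0" using A2 by simp
      then show ?thesis by (simp add: power2_eq_square algebra_simps)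
    qed
    ultimately have "real (card (succs q t)) \<ge> 2" by linarith
    then show ?thesis by simp
  qed
  have spl: "splitting q t" unfolding splitting_def using t card2 succs_alt[OF qT] by simp
  have stem: "is_stem q t"
    unfolding is_stem_def
  proof (intro conjI allI impI spl)
    fix u assume "splitting q u \<and> u \<noteq> t"
    then have u: "u \<in> q" "card (succs q u) \<ge> 2" "u \<noteq> t"
      using succs_alt[OF qT] unfolding splitting_def by auto
    show "length t < length u"
    proof (cases "prefix t u")
      case True then show ?thesis using u(3) prefix_length_less by (metis strict_prefix_def)
    next
      case False
      then have pu: "prefix u t" using comp u by blast
      then have pu': "length u < length t" using u(3) prefix_length_less by (metis strict_prefix_def)
      have "succs q u \<subseteq> {take (Suc (length u)) t}"
      proof
        fix v assume "v \<in> succs q u"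
        then obtain l where v: "v \<in> q" "v = u @ [l]" by (auto simp: succs_def Omega_def)
        have lv: "length v \<le> length t" using pu' v by simp
        have "prefix v t"
        proof (cases "prefix t v")
          case True
          then have "v = t" using lv prefix_length_less[of t v] by (force simp: strict_prefix_def)
          then show ?thesis by simp
        next
          case False then show ?thesis using comp v by blast
        qed
        then have "v = take (length v) t" by (metis append_eq_conv_conj prefix_def)
        then show "v \<in> {take (Suc (length u)) t}" using v by simp
      qed
      then have "card (succs q u) \<le> 1" using card_mono[of "{take (Suc (length u)) t}"] by fastforce
      then show ?thesis using u(2) by simp
    qed
  qed
  have thr: "thr (length t) = ereal (1 + 1 / real (length t))" using t1 by (auto simp: thr_def)
  have mu: "\<forall>u\<in>q. prefix t u \<longrightarrow> mu_node q u \<ge> thr (length t)"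
  proof (intro ballI impI)
    fix u assume "u \<in> q" "prefix t u"
    then show "mu_node q u \<ge> thr (length t)"
      unfolding thr mu_node_def mu_set_def
      using b t1 card_succs_le by (intro mu_build) auto
  qed
  show ?thesis unfolding Etilde_def using sub stem mu by blast
qed

lemma exist_ext:
  assumes s: "s \<in> Q" and pos: "\<forall>u\<in>Q. prefix s u \<longrightarrow> card (succs Q u) > 0"
  shows "\<exists>u\<in>Q. prefix s u \<and> length u = length s + j"
proof (induction j)
  case 0 then show ?case using s by auto
next
  case (Suc j)
  then obtain u where u: "u \<in> Q" "prefix s u" "length u = length s + j" by blast
  then have "succs Q u \<noteq> {}" using pos by fastforce
  then obtain v where "v \<in> succs Q u" by blast
  then obtain l where v: "v \<in> Q" "v = u @ [l]" by (auto simp: succs_def Omega_def)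
  have "prefix s v" using u(2) v(2) by (simp add: prefix_snoc)
  moreover have "length v = length s + Suc j" using v(2) u(3) by simp
  ultimately show ?case using v(1) by blast
qed

lemma core:
  assumes QT: "Q \<subseteq> Tstar" and Qp: "\<forall>u\<in>Q. \<forall>v. prefix v u \<longrightarrow> v \<in> Q" and s: "s \<in> Q"
    and H: "H \<ge> 1" and sl: "length s < 2*H" and c0: "0 \<le> c"
    and cpi: "c \<le> real (pi_fun (length s))"
    and b: "\<forall>u\<in>Q. prefix s u \<longrightarrow> real (M_fun (length u)) - real (card (succs Q u))
              \<le> c * real (a_fun (length u)) powr (1 - 1 / real H)"
  shows "\<exists>q\<in>Etilde. q \<subseteq> Q"
proof -
  have cl: "c \<le> real (pi_fun l)" if "length s \<le> l" for l
  proof -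
    have "pi_fun (length s) \<le> pi_fun l" using pi_mono that by (simp add: mono_def)
    then show ?thesis using cpi by linarith
  qed
  have pos: "\<forall>u\<in>Q. prefix s u \<longrightarrow> card (succs Q u) > 0"
  proof (intro ballI impI)
    fix u assume u: "u \<in> Q" "prefix s u"
    define A where "A = real (a_fun (length u))"
    define P where "P = A powr (1 - 1 / real H)"
    have A2: "A \<ge> 2" using a_ge2 by (simp add: A_def)
    have P0: "P \<ge> 0" by (simp add: P_def)
    have PA: "P < A" using powr_less_self[OF H] by (simp add: P_def A_def)
    have "c \<le> A" using cl[of "length u"] prefix_length_le[OF u(2)] pi_le_a[of "length u"]
      by (simp add: A_def)
    then have cP: "c * P \<le> A * P" using P0 by (simp add: mult_right_mono)
    have "real (M_fun (length u)) - real (card (succs Q u)) \<le> c * P"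
      using b u unfolding P_def A_def by blast
    also note cP
    also have "A * P < A * A" using PA A2 by simp
    finally have "real (M_fun (length u)) - real (card (succs Q u)) < A * A" .
    moreover have "real (M_fun (length u)) = A * A" by (simp add: A_def M_real power2_eq_square)
    ultimately show "card (succs Q u) > 0" by simp
  qed
  obtain t where t: "t \<in> Q" "prefix s t" "length t = 2*H"
    using exist_ext[OF s pos, of "2*H - length s"] sl by auto
  define q where "q = {u\<in>Q. prefix u t \<or> prefix t u}"
  have "q \<in> Etilde"
  proof (rule build)
    show "q \<subseteq> Tstar" using QT by (auto simp: q_def)
    show "\<forall>u\<in>q. \<forall>v. prefix v u \<longrightarrow> v \<in> q"
    proof (intro ballI allI impI)
      fix u v assume u: "u \<in> q" and v: "prefix v u"
      have "v \<in> Q" using u v Qp by (auto simp: q_def)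
      moreover have "prefix v t \<or> prefix t v"
        using u v prefix_same_cases[of v u t] prefix_order.trans[of v u t] by (auto simp: q_def)
      ultimately show "v \<in> q" by (simp add: q_def)
    qed
    show "t \<in> q" using t by (simp add: q_def)
    show "\<forall>u\<in>q. prefix u t \<or> prefix t u" by (simp add: q_def)
    show "length t \<ge> 1" using t H by simp
    show "\<forall>u\<in>q. prefix t u \<longrightarrow> real (M_fun (length u)) - real (card (succs q u))
              \<le> real (a_fun (length u)) powr (1 - 1 / real (length t))"
    proof (intro ballI impI)
      fix u assume u: "u \<in> q" "prefix t u"
      have eq: "succs q u = succs Q u"
        using u(2) by (auto simp: succs_def Omega_def q_def prefix_snoc)
      have ex: "1 / (2 * real H) + (1 - 1 / real H) = 1 - 1 / real (length t)"
        using H t(3) by (simp add: field_simps)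
      define A where "A = real (a_fun (length u))"
      have A2: "A \<ge> 2" using a_ge2 by (simp add: A_def)
      have lu: "2 * H \<le> length u" using prefix_length_le[OF u(2)] t(3) by simp
      have su: "prefix s u" using t(2) u(2) prefix_order.trans by blast
      have "real (M_fun (length u)) - real (card (succs q u)) \<le> c * A powr (1 - 1 / real H)"
        using b u su eq by (simp add: A_def q_def)
      also have "\<dots> \<le> real (pi_fun (length u)) * A powr (1 - 1 / real H)"
        using cl[of "length u"] prefix_length_le[OF su] by (intro mult_right_mono) auto
      also have "\<dots> \<le> A powr (1 / (2 * real H)) * A powr (1 - 1 / real H)"
        using pi_le_apowr[OF H lu] by (intro mult_right_mono) (auto simp: A_def)
      also have "\<dots> = A powr (1 / (2 * real H) + (1 - 1 / real H))"
        by (simp only: powr_add)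
      also have "\<dots> = A powr (1 - 1 / real (length t))"
        using ex by (simp only:)
      finally show "real (M_fun (length u)) - real (card (succs q u))
              \<le> real (a_fun (length u)) powr (1 - 1 / real (length t))" unfolding A_def .
    qed
  qed
  moreover have "q \<subseteq> Q" by (auto simp: q_def)
  ultimately show ?thesis by blast
qed

lemma miss_eq: "real (card (Omega u - succs X u)) = real (M_fun (length u)) - real (card (succs X u))"
proof -
  have "card (Omega u - succs X u) = card (Omega u) - card (succs X u)"
    by (rule card_Diff_subset[OF succs_finite succs_sub])
  then show ?thesis using card_succs_le[of X u] by (simp add: Omega_card)
qed

lemma partA:
  assumes hs: "length s = h" and P: "\<forall>i<pi_fun h. P i \<in> Etilde \<and> s \<in> P i \<and> prefix (stem (P i)) s"
  shows "\<exists>q\<in>Etilde. \<forall>i<pi_fun h. q \<subseteq> P i"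
proof -
  define n where "n = pi_fun h"
  have n0: "0 < n" using pi_ge2[of h] by (simp add: n_def)
  define Q where "Q = {u. \<forall>i<n. u \<in> P i}"
  have "\<exists>q\<in>Etilde. q \<subseteq> Q"
  proof (rule core[where s = s and H = "h+1" and c = "real n"])
    show "Q \<subseteq> Tstar" using P n0 Etilde_sub by (auto simp: Q_def n_def)
    show "\<forall>u\<in>Q. \<forall>v. prefix v u \<longrightarrow> v \<in> Q" using P Etilde_pref by (auto simp: Q_def n_def)
    show "s \<in> Q" using P by (auto simp: Q_def n_def)
    show "h + 1 \<ge> 1" by simp
    show "length s < 2 * (h+1)" using hs by simp
    show "0 \<le> real n" by simp
    show "real n \<le> real (pi_fun (length s))" using hs by (simp add: n_def)
    show "\<forall>u\<in>Q. prefix s u \<longrightarrow> real (M_fun (length u)) - real (card (succs Q u))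
              \<le> real n * real (a_fun (length u)) powr (1 - 1 / real (h+1))"
    proof (intro ballI impI)
      fix u assume u: "u \<in> Q" "prefix s u"
      have sub: "Omega u - succs Q u \<subseteq> (\<Union>i\<in>{..<n}. Omega u - succs (P i) u)"
        using u(1) by (auto simp: succs_def Q_def)
      have "card (Omega u - succs Q u) \<le> card (\<Union>i\<in>{..<n}. Omega u - succs (P i) u)"
        using sub Omega_finite by (intro card_mono) auto
      also have "\<dots> \<le> (\<Sum>i<n. card (Omega u - succs (P i) u))" by (rule card_UN_le) simp
      finally have "real (card (Omega u - succs Q u)) \<le> (\<Sum>i<n. real (card (Omega u - succs (P i) u)))"
        by (metis of_nat_le_iff of_nat_sum)
      also have "\<dots> \<le> (\<Sum>i<n. real (a_fun (length u)) powr (1 - 1 / real (h+1)))"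
      proof (rule sum_mono)
        fix i assume i: "i \<in> {..<n}"
        then have Pi: "P i \<in> Etilde" "s \<in> P i" "prefix (stem (P i)) s" using P by (auto simp: n_def)
        have "u \<in> P i" using u(1) i by (auto simp: Q_def)
        moreover have "prefix (stem (P i)) u" using Pi(3) u(2) prefix_order.trans by blast
        moreover have "length (stem (P i)) \<le> h" using prefix_length_le[OF Pi(3)] hs by simp
        ultimately show "real (card (Omega u - succs (P i) u)) \<le> real (a_fun (length u)) powr (1 - 1 / real (h+1))"
          unfolding miss_eq using miss_bound[OF Pi(1)] by blast
      qed
      also have "\<dots> = real n * real (a_fun (length u)) powr (1 - 1 / real (h+1))" by simp
      finally show "real (M_fun (length u)) - real (card (succs Q u))
              \<le> real n * real (a_fun (length u)) powr (1 - 1 / real (h+1))"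
        unfolding miss_eq .
    qed
  qed
  then obtain q where "q \<in> Etilde" "q \<subseteq> Q" by blast
  then show ?thesis by (auto simp: Q_def n_def)
qed

lemma partC:
  assumes p: "p \<in> Etilde"
  shows "\<exists>q\<in>Etilde. q \<subseteq> p \<and> (\<exists>n. avoids_from q x n)"
proof -
  define h0 where "h0 = length (stem p)"
  define N where "N = 2 * (h0 + 1)"
  define Q where "Q = {u\<in>p. \<forall>m. N \<le> m \<and> m < length u \<longrightarrow> u ! m \<noteq> x m}"
  have "\<exists>q\<in>Etilde. q \<subseteq> Q"
  proof (rule core[where s = "stem p" and H = "h0+1" and c = 2])
    show "Q \<subseteq> Tstar" using Etilde_sub[OF p] by (auto simp: Q_def)
    show "\<forall>u\<in>Q. \<forall>v. prefix v u \<longrightarrow> v \<in> Q"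
    proof (intro ballI allI impI)
      fix u v assume u: "u \<in> Q" and v: "prefix v u"
      then obtain zs where uz: "u = v @ zs" by (auto simp: prefix_def)
      have "v \<in> p" using u v Etilde_pref[OF p] by (auto simp: Q_def)
      moreover have "\<forall>m. N \<le> m \<and> m < length v \<longrightarrow> v ! m \<noteq> x m"
      proof (intro allI impI)
        fix m assume m: "N \<le> m \<and> m < length v"
        then have "u ! m = v ! m" using uz by (simp add: nth_append)
        moreover have "u ! m \<noteq> x m" using u m uz by (auto simp: Q_def)
        ultimately show "v ! m \<noteq> x m" by simp
      qed
      ultimately show "v \<in> Q" by (simp add: Q_def)
    qed
    show "stem p \<in> Q" using stem_in[OF p] by (auto simp: Q_def N_def h0_def)
    show "h0 + 1 \<ge> 1" by simp
    show "length (stem p) < 2 * (h0+1)" by (simp add: h0_def)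
    show "0 \<le> (2::real)" by simp
    show "2 \<le> real (pi_fun (length (stem p)))" using pi_ge2[of "length (stem p)"] by simp
    show "\<forall>u\<in>Q. prefix (stem p) u \<longrightarrow> real (M_fun (length u)) - real (card (succs Q u))
              \<le> 2 * real (a_fun (length u)) powr (1 - 1 / real (h0+1))"
    proof (intro ballI impI)
      fix u assume u: "u \<in> Q" "prefix (stem p) u"
      define P where "P = real (a_fun (length u)) powr (1 - 1 / real (h0+1))"
      have P1: "1 \<le> P" unfolding P_def using a_ge2[of "length u"]
        by (intro ge_one_powr_ge_zero) auto
      have up: "u \<in> p" using u by (simp add: Q_def)
      have sub: "succs p u \<subseteq> insert (u @ [x (length u)]) (succs Q u)"
      proof
        fix v assume v: "v \<in> succs p u"
        then obtain l where vl: "v = u @ [l]" "v \<in> p" by (auto simp: succs_def Omega_def)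
        show "v \<in> insert (u @ [x (length u)]) (succs Q u)"
        proof (cases "l = x (length u)")
          case True then show ?thesis using vl by simp
        next
          case False
          have "\<forall>m. N \<le> m \<and> m < length v \<longrightarrow> v ! m \<noteq> x m"
          proof (intro allI impI)
            fix m assume m: "N \<le> m \<and> m < length v"
            show "v ! m \<noteq> x m"
            proof (cases "m < length u")
              case True
              then show ?thesis using u(1) m vl by (auto simp: Q_def nth_append)
            next
              case False
              then have "m = length u" using m vl by simp
              then show ?thesis using vl False \<open>l \<noteq> x (length u)\<close> by simp
            qed
          qed
          then have "v \<in> Q" using vl by (simp add: Q_def)
          then show ?thesis using v by (auto simp: succs_def)
        qed
      qed
      have "card (succs p u) \<le> card (insert (u @ [x (length u)]) (succs Q u))"
        using sub succs_finite by (intro card_mono) auto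
      also have "\<dots> \<le> card (succs Q u) + 1" by (simp add: card_insert_if succs_finite)
      finally have c1: "real (card (succs p u)) \<le> real (card (succs Q u)) + 1" by linarith
      have "real (M_fun (length u)) - real (card (succs p u)) \<le> P"
        unfolding P_def h0_def using miss_bound[OF p up u(2)] by simp
      then show "real (M_fun (length u)) - real (card (succs Q u))
              \<le> 2 * real (a_fun (length u)) powr (1 - 1 / real (h0+1))"
        using c1 P1 unfolding P_def[symmetric] by linarith
    qed
  qed
  then obtain q where q: "q \<in> Etilde" "q \<subseteq> Q" by blast
  have "q \<subseteq> p" using q(2) by (auto simp: Q_def)
  moreover have "avoids_from q x N" using q(2) by (auto simp: avoids_from_def Q_def)
  ultimately show ?thesis using q(1) by blast
qed

lemma Etilde_pos:
  assumes p: "p \<in> Etilde"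
  shows "\<forall>u\<in>p. prefix (stem p) u \<longrightarrow> card (succs p u) > 0"
proof (intro ballI impI)
  fix u assume u: "u \<in> p" "prefix (stem p) u"
  have "real (M_fun (length u)) - real (card (succs p u))
           \<le> real (a_fun (length u)) powr (1 - 1 / real (length (stem p) + 1))"
    using miss_bound[OF p u] by simp
  also have "\<dots> \<le> real (a_fun (length u))" by (rule powr_le_self) simp
  finally have "real (M_fun (length u)) - real (card (succs p u)) \<le> real (a_fun (length u))" .
  moreover have "real (M_fun (length u)) = real (a_fun (length u)) * real (a_fun (length u))"
    by (simp add: M_real power2_eq_square)
  moreover have "real (a_fun (length u)) * real (a_fun (length u)) > real (a_fun (length u))"
    using a_ge2[of "length u"] by simp
  ultimately show "card (succs p u) > 0" by linarith
qed

lemma Etilde_levels: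
  assumes p: "p \<in> Etilde" and i: "length (stem p) \<le> i"
  shows "\<exists>u\<in>p. prefix (stem p) u \<and> length u = i"
  using exist_ext[OF stem_in[OF p] Etilde_pos[OF p], of "i - length (stem p)"] i by auto

lemma pi_ge_id: "h \<le> pi_fun h"
proof -
  define B where "B = (h+1)^2 * rho h^(h+1)"
  have r1: "rho h \<ge> 1" using rho_ge[of h] by simp
  have "h \<le> (h+1)^2" by (simp add: power2_eq_square)
  also have "\<dots> \<le> B" using r1 by (simp add: B_def)
  also have "B \<le> B ^ (rho h ^ h)" using r1 \<open>h \<le> (h+1)^2\<close>
    by (intro self_le_power) (auto simp: B_def)
  finally show ?thesis by (simp add: pi_fun_def B_def)
qed

lemma partB: "fg_linked rho pi_fun Etilde (\<subseteq>)"
proof -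
  define enum where "enum i = (SOME f. bij_betw f {0..<card (Tlev i)} (Tlev i))" for i
  have enum: "bij_betw (enum i) {0..<card (Tlev i)} (Tlev i)" for i
    unfolding enum_def using someI_ex[OF ex_bij_betw_nat_finite[OF Tlev_finite]] .
  define QQ where "QQ i j = {p\<in>Etilde. j < card (Tlev i) \<and> enum i j \<in> p \<and> prefix (stem p) (enum i j)}" for i j
  have "\<forall>x. x \<le> rho x" using rho_ge by (metis le_add1 order_trans)
  then have f1: "filterlim rho at_top sequentially"
    by (intro filterlim_at_top_mono[OF filterlim_ident] always_eventually)
  have f2: "filterlim pi_fun at_top sequentially"
    using pi_ge_id by (intro filterlim_at_top_mono[OF filterlim_ident] always_eventually) blast
  have lk: "\<forall>i j. j < rho i \<longrightarrow> QQ i j \<subseteq> Etilde \<and> linked_set (pi_fun i) (QQ i j) Etilde (\<subseteq>)"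
  proof (intro allI impI conjI)
    fix i j assume "j < rho i"
    show "QQ i j \<subseteq> Etilde" by (auto simp: QQ_def)
    show "linked_set (pi_fun i) (QQ i j) Etilde (\<subseteq>)"
      unfolding linked_set_def
    proof (intro allI impI)
      fix x :: "nat \<Rightarrow> nat list set" assume x: "\<forall>k<pi_fun i. x k \<in> QQ i j"
      have "x 0 \<in> QQ i j" using x pi_ge2[of i] by simp
      then have "j < card (Tlev i)" by (simp add: QQ_def)
      then have "enum i j \<in> Tlev i" using enum[of i] bij_betwE by fastforce
      then have len: "length (enum i j) = i" by (rule Tlev_length)
      show "\<exists>r\<in>Etilde. \<forall>k<pi_fun i. r \<subseteq> x k"
        by (rule partA[OF len]) (use x in \<open>auto simp: QQ_def\<close>)
    qed
  qed
  have cov: "\<forall>q\<in>Etilde. \<forall>\<^sub>F i in sequentially. \<exists>j<rho i. q \<in> QQ i j"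
  proof
    fix q assume q: "q \<in> Etilde"
    show "\<forall>\<^sub>F i in sequentially. \<exists>j<rho i. q \<in> QQ i j"
    proof (rule eventually_sequentiallyI[of "length (stem q)"])
      fix i assume i: "length (stem q) \<le> i"
      obtain u where u: "u \<in> q" "prefix (stem q) u" "length u = i"
        using Etilde_levels[OF q i] by blast
      have "u \<in> Tlev i" using u Etilde_sub[OF q] Tstar_lev by blast
      then obtain j where j: "j \<in> {0..<card (Tlev i)}" "enum i j = u"
        using bij_betw_imp_surj_on[OF enum[of i]] by (metis imageE)
      have "j < rho i" using j(1) by (simp add: rho_def)
      moreover have "q \<in> QQ i j" using j u q by (simp add: QQ_def)
      ultimately show "\<exists>j<rho i. q \<in> QQ i j" by blast
    qed
  qed
  show ?thesis unfolding fg_linked_def using f1 f2 lk cov by blast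
qed

lemma fg_ccc:
  assumes fg: "fg_linked f g Q le" and g2: "\<forall>i. g i \<ge> 2"
  shows "ccc Q le"
proof -
  obtain QQ where lk: "\<forall>i j. j < f i \<longrightarrow> QQ i j \<subseteq> Q \<and> linked_set (g i) (QQ i j) Q le"
    and cov: "\<forall>q\<in>Q. \<forall>\<^sub>F i in sequentially. \<exists>j<f i. q \<in> QQ i j"
    using fg unfolding fg_linked_def by blast
  show ?thesis unfolding ccc_def
  proof (intro allI impI)
    fix A assume A: "A \<subseteq> Q" and anti: "\<forall>p\<in>A. \<forall>q\<in>A. p \<noteq> q \<longrightarrow> \<not> compatible Q le p q"
    have ex: "\<exists>ij. snd ij < f (fst ij) \<and> p \<in> QQ (fst ij) (snd ij)" if "p \<in> A" for p
    proof -
      have "\<forall>\<^sub>F i in sequentially. \<exists>j<f i. p \<in> QQ i j" using cov A that by blast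
      then obtain N where "\<forall>i\<ge>N. \<exists>j<f i. p \<in> QQ i j" by (auto simp: eventually_sequentially)
      then obtain j where "j < f N" "p \<in> QQ N j" by blast
      then show ?thesis by (intro exI[of _ "(N, j)"]) simp
    qed
    define F where "F p = (SOME ij. snd ij < f (fst ij) \<and> p \<in> QQ (fst ij) (snd ij))" for p
    have F: "snd (F p) < f (fst (F p)) \<and> p \<in> QQ (fst (F p)) (snd (F p))" if "p \<in> A" for p
      unfolding F_def using someI_ex[OF ex[OF that]] .
    have "inj_on F A"
    proof (rule inj_onI)
      fix p q assume p: "p \<in> A" and q: "q \<in> A" and eq: "F p = F q"
      define i where "i = fst (F p)"
      define j where "j = snd (F p)"
      have pq: "j < f i" "p \<in> QQ i j" "q \<in> QQ i j" using F[OF p] F[OF q] eq by (auto simp: i_def j_def)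
      have L: "linked_set (g i) (QQ i j) Q le" using lk pq(1) by blast
      define x where "x k = (if k = 0 then p else q)" for k :: nat
      have "\<forall>k<g i. x k \<in> QQ i j" using pq by (auto simp: x_def)
      then obtain r where r: "r \<in> Q" "\<forall>k<g i. le r (x k)" using L unfolding linked_set_def by blast
      have "le r p" using r(2) g2[rule_format, of i] by (metis x_def zero_less_numeral less_le_trans)
      moreover have "le r q" using r(2) g2[rule_format, of i] 
        by (metis x_def one_less_numeral_iff semiring_norm(76) less_le_trans one_neq_zero)
      ultimately have "compatible Q le p q" using r(1) by (auto simp: compatible_def)
      then show "p = q" using anti p q by blast
    qed
    then show "countable A" by (rule countableI')
  qed
qed

lemma partCCC: "ccc Etilde (\<subseteq>)"
  using fg_ccc[OF partB] pi_ge2 by blast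

lemma prod_one_minus_ge:
  assumes "finite A" "\<forall>i\<in>A. 0 \<le> f i \<and> f i \<le> (1::real)"
  shows "1 - sum f A \<le> (\<Prod>i\<in>A. 1 - f i) \<and> (\<Prod>i\<in>A. 1 - f i) \<le> 1 \<and> 0 \<le> (\<Prod>i\<in>A. 1 - f i)"
  using assms
proof (induction A rule: finite_induct)
  case empty then show ?case by simp
next
  case (insert a A)
  then have IH: "1 - sum f A \<le> (\<Prod>i\<in>A. 1 - f i)" "(\<Prod>i\<in>A. 1 - f i) \<le> 1" "0 \<le> (\<Prod>i\<in>A. 1 - f i)"
    and fa: "0 \<le> f a" "f a \<le> 1" by auto
  define P where "P = (\<Prod>i\<in>A. 1 - f i)"
  have "f a * P \<le> f a" using IH fa by (simp add: P_def mult_left_le)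
  then have "1 - (f a + sum f A) \<le> (1 - f a) * P" using IH by (simp add: P_def algebra_simps)
  moreover have "(1 - f a) * P \<le> 1" using IH fa by (simp add: P_def mult_le_one)
  moreover have "0 \<le> (1 - f a) * P" using IH fa by (simp add: P_def)
  ultimately show ?case using insert(1,2) by (simp add: P_def)
qed

lemma geom_sum:
  assumes "L \<le> h"
  shows "(\<Sum>l\<in>{L..<h}. (1/2::real)^(l+2)) \<le> (1/2)^(L+1) - (1/2)^(h+1)"
  using assms
proof (induction h rule: dec_induct)
  case base then show ?case by simp
next
  case (step n)
  have "(\<Sum>l\<in>{L..<Suc n}. (1/2::real)^(l+2)) = (\<Sum>l\<in>{L..<n}. (1/2::real)^(l+2)) + (1/2)^(n+2)"
    using step(1) by simp
  also have "\<dots> \<le> (1/2)^(L+1) - (1/2)^(n+1) + (1/2)^(n+2)" using step(3) by simp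
  also have "\<dots> = (1/2)^(L+1) - (1/2)^(Suc n+1)" by simp
  finally show ?case .
qed

lemma a_ge_pow2: "real (a_fun l) \<ge> 2 ^ (l+2)"
proof -
  have "(2::nat) ^ (l+2) \<le> pi_fun l ^ (l+2)" using pi_ge2[of l] by (intro power_mono) auto
  then have "(2::nat) ^ (l+2) \<le> a_fun l" by (simp add: a_fun_def)
  then have "real ((2::nat) ^ (l+2)) \<le> real (a_fun l)" by (simp only: of_nat_le_iff)
  then show ?thesis by simp
qed

lemma pref_eq_len: "prefix a b \<Longrightarrow> length b \<le> length a \<Longrightarrow> a = b"
  by (auto simp: prefix_def)

lemma partE:
  assumes p: "p \<in> Etilde" and ld: "loss_defined p" and h: "h > length (stem p)"
  shows "real (card {t \<in> p. length t = h})
              / real (card {t \<in> Tstar. length t = h \<and> (prefix (stem p) t \<or> prefix t (stem p))})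
            \<ge> 1 - loss p / 2"
proof -
  define s where "s = stem p"
  define L where "L = length s"
  define m0 where "m0 = (GREATEST m. loss_ok p m)"
  have bnd: "y \<le> L" if "loss_ok p y" for y using that by (auto simp: loss_ok_def L_def s_def)
  have lo: "loss_ok p m0" unfolding m0_def
    by (rule GreatestI_ex_nat[OF ld[unfolded loss_defined_def] bnd])
  have m2: "m0 \<ge> 2" and m3: "3 * m0 < L"
    and mu: "\<forall>u\<in>p. length u \<ge> L \<longrightarrow> mu_node p u \<ge> ereal (1 + 1 / real m0)"
    using lo by (auto simp: loss_ok_def L_def s_def)
  have lossv: "loss p = 1 / real m0" by (simp add: loss_def m0_def)
  define x where "x l = real (a_fun l) powr (1 - 1 / real m0) / real (M_fun l)" for l
  have x01: "0 \<le> x l \<and> x l \<le> 1" for l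
  proof -
    have "real (a_fun l) powr (1 - 1 / real m0) \<le> real (a_fun l)" using m2 by (intro powr_le_self) simp
    also have "\<dots> \<le> real (M_fun l)" using a_ge2[of l] by (simp add: M_real power2_eq_square)
    finally show ?thesis using M_pos[of l] by (simp add: x_def)
  qed
  have xa: "x l \<le> (1/2)^(l+2)" for l
  proof -
    have A2: "real (a_fun l) \<ge> 2" by (rule a_ge2)
    have "real (a_fun l) powr (1 - 1 / real m0) \<le> real (a_fun l)" using m2 by (intro powr_le_self) simp
    then have "x l \<le> real (a_fun l) / real (M_fun l)" using M_pos[of l] by (simp add: x_def divide_right_mono)
    also have "\<dots> = 1 / real (a_fun l)" using A2 by (simp add: M_real power2_eq_square)
    also have "\<dots> \<le> 1 / 2 ^ (l+2)" using a_ge_pow2[of l] by (simp add: frac_le)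
    also have "\<dots> = (1/2)^(l+2)" by (simp add: power_one_over)
    finally show ?thesis .
  qed
  define N where "N j = card {t \<in> p. length t = j}" for j
  define D where "D j = card {t \<in> Tstar. length t = j \<and> (prefix s t \<or> prefix t s)}" for j
  define Pr where "Pr j = (\<Prod>l\<in>{L..<j}. 1 - x l)" for j
  have levfin: "finite {t \<in> X. length t = j}" if "X \<subseteq> Tstar" for X j
  proof -
    have "{t \<in> X. length t = j} \<subseteq> Tlev j" using that Tstar_lev by auto
    then show ?thesis using Tlev_finite finite_subset by blast
  qed
  have pT: "p \<subseteq> Tstar" by (rule Etilde_sub[OF p])
  have Dfin: "finite {t \<in> Tstar. length t = j \<and> (prefix s t \<or> prefix t s)}" for j
  proof -
    have "{t \<in> Tstar. length t = j \<and> (prefix s t \<or> prefix t s)} \<subseteq> Tlev j" using Tstar_lev by auto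
    then show ?thesis using Tlev_finite finite_subset by blast
  qed
  have sp: "s \<in> p" using stem_in[OF p] by (simp add: s_def)
  have claim: "real (N j) \<ge> Pr j * real (D j)" if "L \<le> j" for j
    using that
  proof (induction j rule: dec_induct)
    case base
    have "{t \<in> Tstar. length t = L \<and> (prefix s t \<or> prefix t s)} \<subseteq> {s}"
      by (auto simp: L_def dest: pref_eq_len)
    then have "D L \<le> 1" unfolding D_def using card_mono[of "{s}"] by fastforce
    moreover have "N L \<ge> 1"
    proof -
      have "s \<in> {t \<in> p. length t = L}" using sp by (simp add: L_def)
      then have "card {t \<in> p. length t = L} > 0" using levfin[OF pT] by (auto simp: card_gt_0_iff)
      then show ?thesis by (simp add: N_def)
    qed
    ultimately show ?case by (simp add: Pr_def)
  next
    case (step j)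
    let ?lev = "{t \<in> p. length t = j}"
    have succ_ge: "real (card (succs p u)) \<ge> real (M_fun j) * (1 - x j)" if u: "u \<in> ?lev" for u
    proof -
      have "mu_node p u \<ge> ereal (1 + 1 / real m0)" using mu u step(1) by auto
      then have mf: "real (M_fun (length u)) - real (card (succs p u)) \<le> real (a_fun (length u)) powr (1 - 1 / real m0)"
        using m2 by (intro mu_extract) (auto simp: mu_node_def mu_set_def card_succs_le)
      have lu: "length u = j" using u by simp
      have "real (M_fun j) - real (card (succs p u)) \<le> real (a_fun j) powr (1 - 1 / real m0)"
        using mf unfolding lu .
      moreover have "real (M_fun j) * (1 - x j) = real (M_fun j) - real (a_fun j) powr (1 - 1 / real m0)"
      proof -
        have Mne: "real (M_fun j) \<noteq> 0" using M_pos[of j] by simp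
        have e1: "real (M_fun j) * (1 - x j) = real (M_fun j) - real (M_fun j) * x j"
          by (simp only: right_diff_distrib mult_1_right)
        have e2: "real (M_fun j) * x j = real (a_fun j) powr (1 - 1 / real m0)"
          unfolding x_def times_divide_eq_right using Mne by (rule nonzero_mult_div_cancel_left)
        show ?thesis unfolding e1 e2 ..
      qed
      ultimately show ?thesis by linarith
    qed
    have Nstep: "real (N (Suc j)) \<ge> real (N j) * (real (M_fun j) * (1 - x j))"
    proof -
      have disj: "\<forall>u\<in>?lev. \<forall>v\<in>?lev. u \<noteq> v \<longrightarrow> succs p u \<inter> succs p v = {}"
        by (auto simp: succs_def Omega_def)
      have e1: "card (\<Union>u\<in>?lev. succs p u) = (\<Sum>u\<in>?lev. card (succs p u))"
        using levfin[OF pT] disj succs_finite by (intro card_UN_disjoint) auto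
      have s1: "(\<Union>u\<in>?lev. succs p u) \<subseteq> {t \<in> p. length t = Suc j}"
        by (auto simp: succs_def Omega_def)
      have e2: "card (\<Union>u\<in>?lev. succs p u) \<le> N (Suc j)"
        unfolding N_def by (rule card_mono[OF levfin[OF pT] s1])
      have "(\<Sum>u\<in>?lev. card (succs p u)) \<le> N (Suc j)"
        using e1 e2 by linarith
      then have "real (\<Sum>u\<in>?lev. card (succs p u)) \<le> real (N (Suc j))"
        by (simp only: of_nat_le_iff)
      then have "(\<Sum>u\<in>?lev. real (card (succs p u))) \<le> real (N (Suc j))"
        by (simp only: of_nat_sum)
      moreover have "(\<Sum>u\<in>?lev. real (M_fun j) * (1 - x j)) \<le> (\<Sum>u\<in>?lev. real (card (succs p u)))"
        using succ_ge by (rule sum_mono)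
      moreover have "(\<Sum>u\<in>?lev. real (M_fun j) * (1 - x j)) = real (N j) * (real (M_fun j) * (1 - x j))"
        by (simp add: N_def)
      ultimately show ?thesis by linarith
    qed
    have Dstep: "real (D (Suc j)) \<le> real (D j) * real (M_fun j)"
    proof -
      let ?Dj = "{t \<in> Tstar. length t = j \<and> (prefix s t \<or> prefix t s)}"
      have "{t \<in> Tstar. length t = Suc j \<and> (prefix s t \<or> prefix t s)} \<subseteq> (\<Union>w\<in>?Dj. Omega w)"
      proof
        fix t assume t: "t \<in> {t \<in> Tstar. length t = Suc j \<and> (prefix s t \<or> prefix t s)}"
        have tT: "t \<in> Tstar" and tl: "length t = Suc j" and tp: "prefix s t \<or> prefix t s"
          using t by simp_all
        have "t \<noteq> []" using tl by auto
        then obtain w l where wl: "t = w @ [l]" by (cases t rule: rev_cases) auto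
        have lw: "length w = j" using tl wl by simp
        have sL: "length s = L" by (simp add: L_def)
        have st: "prefix s t"
        proof (rule ccontr)
          assume "\<not> prefix s t"
          then have "prefix t s" using tp by blast
          then have "length t \<le> length s" by (rule prefix_length_le)
          then show False using tl sL step(1) by simp
        qed
        have "s \<noteq> w @ [l]" using sL lw step(1) by (metis Suc_n_not_le_n length_append_singleton)
        then have sw: "prefix s w" using st unfolding wl prefix_snoc by blast
        have "w @ [l] \<in> Tstar" using tT wl by simp
        then have wT: "w \<in> Tstar" and lM: "l < M_fun j" using lw unfolding Tstar_snoc by simp_all
        have "w \<in> ?Dj" using wT lw sw by simp
        moreover have "t \<in> Omega w" using wl lM lw by (simp add: Omega_def)
        ultimately show "t \<in> (\<Union>w\<in>?Dj. Omega w)" by blast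
      qed
      moreover have "finite (\<Union>w\<in>?Dj. Omega w)" using Dfin Omega_finite by blast
      ultimately have "D (Suc j) \<le> card (\<Union>w\<in>?Dj. Omega w)" unfolding D_def
        by (intro card_mono)
      also have "\<dots> \<le> (\<Sum>w\<in>?Dj. card (Omega w))" by (rule card_UN_le[OF Dfin])
      also have "\<dots> = (\<Sum>w\<in>?Dj. M_fun j)" unfolding Omega_card
        by (rule sum.cong) auto
      also have "\<dots> = D j * M_fun j" unfolding D_def sum_constant by simp
      finally have "real (D (Suc j)) \<le> real (D j * M_fun j)" by (simp only: of_nat_le_iff)
      then show ?thesis by (simp only: of_nat_mult)
    qed
    have Pr0: "0 \<le> Pr j" unfolding Pr_def using prod_one_minus_ge[of "{L..<j}" x] x01 by auto
    have x1: "0 \<le> 1 - x j" using x01[of j] by simp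
    have "Pr (Suc j) * real (D (Suc j)) = Pr j * (1 - x j) * real (D (Suc j))"
      using step(1) by (simp add: Pr_def)
    also have "\<dots> \<le> Pr j * (1 - x j) * (real (D j) * real (M_fun j))"
      using Dstep Pr0 x1 by (intro mult_left_mono) auto
    also have "\<dots> = (Pr j * real (D j)) * (real (M_fun j) * (1 - x j))" by (simp add: algebra_simps)
    also have "\<dots> \<le> real (N j) * (real (M_fun j) * (1 - x j))"
      using step(3) x1 by (intro mult_right_mono) auto
    also have "\<dots> \<le> real (N (Suc j))" by (rule Nstep)
    finally show ?case .
  qed
  have hL: "L \<le> h" using h by (simp add: L_def s_def)
  have Dpos: "D h > 0"
  proof -
    obtain u where u: "u \<in> p" "prefix s u" "length u = h"
      using Etilde_levels[OF p] hL by (auto simp: s_def L_def)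
    then have "u \<in> {t \<in> Tstar. length t = h \<and> (prefix s t \<or> prefix t s)}" using pT by auto
    then show ?thesis unfolding D_def using Dfin by (auto simp: card_gt_0_iff)
  qed
  have r1: "real (N h) / real (D h) \<ge> Pr h"
    using claim[OF hL] Dpos by (simp add: pos_le_divide_eq)
  have r2: "Pr h \<ge> 1 - (\<Sum>l\<in>{L..<h}. x l)"
    unfolding Pr_def using prod_one_minus_ge[of "{L..<h}" x] x01 by auto
  have "(\<Sum>l\<in>{L..<h}. x l) \<le> (\<Sum>l\<in>{L..<h}. (1/2::real)^(l+2))" using xa by (rule sum_mono)
  also have "\<dots> \<le> (1/2)^(L+1) - (1/2)^(h+1)" by (rule geom_sum[OF hL])
  also have "\<dots> \<le> (1/2)^(L+1)" by simp
  also have "\<dots> \<le> 1 / (2 * real m0)"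
  proof -
    have "m0 < 2 ^ m0" by (rule less_exp)
    also have "(2::nat) ^ m0 \<le> 2 ^ L" using m3 by (intro power_increasing) auto
    finally have "2 * m0 < 2 ^ (L+1)" by simp
    then have "real (2 * m0) \<le> real ((2::nat) ^ (L+1))" by (simp only: of_nat_le_iff less_imp_le)
    then have "real (2 * m0) \<le> 2 ^ (L+1)" by simp
    then have "1 / (2::real) ^ (L+1) \<le> 1 / (2 * real m0)" using m2 by (intro frac_le) auto
    then show ?thesis by (simp add: power_one_over)
  qed
  finally have "1 - 1 / (2 * real m0) \<le> real (N h) / real (D h)" using r1 r2 by linarith
  then show ?thesis by (simp add: lossv N_def D_def s_def)
qed

theorem lemma1:
  shows "(\<forall>(h::nat) (s::nat list) (P::nat \<Rightarrow> nat list set).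
            length s = h \<and> (\<forall>i<pi_fun h. P i \<in> Etilde \<and> s \<in> P i \<and> prefix (stem (P i)) s)
            \<longrightarrow> (\<exists>q\<in>Etilde. \<forall>i<pi_fun h. q \<subseteq> P i))
       \<and> fg_linked rho pi_fun Etilde (\<subseteq>)
       \<and> ccc Etilde (\<subseteq>)
       \<and> (\<forall>(x::nat \<Rightarrow> nat). \<forall>p\<in>Etilde. \<exists>q\<in>Etilde. q \<subseteq> p \<and> (\<exists>n. avoids_from q x n))
       \<and> (\<forall>p\<in>Etilde. \<forall>h::nat. loss_defined p \<and> h > length (stem p) \<longrightarrow>
            real (card {t \<in> p. length t = h})
              / real (card {t \<in> Tstar. length t = h \<and> (prefix (stem p) t \<or> prefix t (stem p))})
            \<ge> 1 - loss p / 2)"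
proof (intro conjI)
  show "\<forall>(h::nat) (s::nat list) (P::nat \<Rightarrow> nat list set).
            length s = h \<and> (\<forall>i<pi_fun h. P i \<in> Etilde \<and> s \<in> P i \<and> prefix (stem (P i)) s)
            \<longrightarrow> (\<exists>q\<in>Etilde. \<forall>i<pi_fun h. q \<subseteq> P i)"
  proof (intro allI impI)
    fix h :: nat and s :: "nat list" and P :: "nat \<Rightarrow> nat list set"
    assume a: "length s = h \<and> (\<forall>i<pi_fun h. P i \<in> Etilde \<and> s \<in> P i \<and> prefix (stem (P i)) s)"
    show "\<exists>q\<in>Etilde. \<forall>i<pi_fun h. q \<subseteq> P i"
      using partA[of s h P] a by simp
  qed
  show "fg_linked rho pi_fun Etilde (\<subseteq>)" by (rule partB)
  show "ccc Etilde (\<subseteq>)" by (rule partCCC)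
  show "\<forall>(x::nat \<Rightarrow> nat). \<forall>p\<in>Etilde. \<exists>q\<in>Etilde. q \<subseteq> p \<and> (\<exists>n. avoids_from q x n)"
  proof (intro allI ballI)
    fix x :: "nat \<Rightarrow> nat" and p assume "p \<in> Etilde"
    then show "\<exists>q\<in>Etilde. q \<subseteq> p \<and> (\<exists>n. avoids_from q x n)" by (rule partC)
  qed
  show "\<forall>p\<in>Etilde. \<forall>h::nat. loss_defined p \<and> h > length (stem p) \<longrightarrow>
            real (card {t \<in> p. length t = h})
              / real (card {t \<in> Tstar. length t = h \<and> (prefix (stem p) t \<or> prefix t (stem p))})
            \<ge> 1 - loss p / 2"
  proof (intro ballI allI impI)
    fix p and h :: nat assume "p \<in> Etilde" "loss_defined p \<and> h > length (stem p)"
    then show "real (card {t \<in> p. length t = h})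
              / real (card {t \<in> Tstar. length t = h \<and> (prefix (stem p) t \<or> prefix t (stem p))})
            \<ge> 1 - loss p / 2" using partE by blast
  qed
qed

end
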